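(* Assume the hypotheses on $\mathfrak{R}$ and the discrete inf-sup condition: there exist a linear operator $\mathfrak{R}:V\to W'$ and constants $\alpha_*,M^*,\kappa>0$ with $\inf_{w\ne0}\sup_{v\neq0}\langle\mathfrak{R}v,w\rangle/(\|w\|_W\|v\|_V)\ge\alpha_*$, $\|\mathfrak{R}v\|_{W'}\le M^*\|v\|_V$ for all $v\in V$, and $\kappa\|w\|_W\le\sup_{v_\eta\in V_\eta,v_\eta\ne0}\mathcal{A}(w,v_\eta)/\|v_\eta\|_V$ for all $w\in W_\theta\cup S_\theta$. Let $\mathcal{J}:W\to\mathbb{R}$ be a functional with constants $0<c_*\le C^*$ such that $c_*\|w\|_{op,\eta}\le\mathcal{J}(w)\le C^*\|w\|_{op,\eta}$ for all $w\in W$. Let $(\tilde w^n_\theta)\subset W_\theta$ satisfy $\lim_n\mathcal{J}(u-\tilde w^n_\theta)=\inf_{w_\theta\in W_\theta}\mathcal{J}(u-w_\theta)$ and converge weakly in $W$ to $u^\flat_\theta$. Then $$\|u-u^\flat_\theta\|_W\le\Big(1+2\frac{C^*}{c_*}\frac{M^*}{\alpha_*}\frac{M}{\kappa}\Big)\inf_{w_\theta\in W_\theta}\|u-w_\theta\|_W.$$ Moreover every such minimizing sequence is bounded in $W$ and hence has a weakly convergent subsequence.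
   Context: $W$ and $V$ are reflexive separable real Banach spaces, $W'$ the dual of $W$ with duality pairing $\langle\cdot,\cdot\rangle$. $\mathcal{A}:W\times V\to\mathbb{R}$ is a bilinear form with $\mathcal{A}(w,v)\le M\|w\|_W\|v\|_V$, $\mathcal{F}:V\to\mathbb{R}$ is bounded linear, and $u\in W$ is the unique solution of $\mathcal{A}(u,v)=\mathcal{F}(v)$ for all $v\in V$. $W_\theta\subseteq W$ and $V_\eta\subseteq V$ are arbitrary subsets, $V_\eta$ containing an element of nonzero norm. For $w\in W$, $\|w\|_{op,\eta}:=\sup_{v_\eta\in V_\eta,\ \|v_\eta\|_V\neq0}\mathcal{A}(w,v_\eta)/\|v_\eta\|_V$. $S_\theta:=\{w_1-w_2:\ w_1,w_2\in W_\theta\}$. *)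

theory Defs
  imports "HOL-Analysis.Analysis"
begin

definition reflexive_space :: "'a::real_normed_vector itself \<Rightarrow> bool" where
  "reflexive_space _ \<longleftrightarrow>
     (\<forall>\<phi> :: ('a \<Rightarrow>\<^sub>L real) \<Rightarrow>\<^sub>L real. \<exists>x::'a. \<forall>f. blinfun_apply \<phi> f = blinfun_apply f x)"

definition separable_type :: "'a::metric_space itself \<Rightarrow> bool" where
  "separable_type _ \<longleftrightarrow> (\<exists>D::'a set. countable D \<and> closure D = UNIV)"

definition weakly_converges_to :: "(nat \<Rightarrow> 'a::real_normed_vector) \<Rightarrow> 'a \<Rightarrow> bool" where
  "weakly_converges_to X x \<longleftrightarrow> (\<forall>f :: 'a \<Rightarrow>\<^sub>L real. (\<lambda>n. blinfun_apply f (X n)) \<longlonglongrightarrow> blinfun_apply f x)"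

definition op_norm_eta :: "('w \<Rightarrow> 'v::real_normed_vector \<Rightarrow> real) \<Rightarrow> 'v set \<Rightarrow> 'w \<Rightarrow> real" where
  "op_norm_eta A Veta w = Sup {A w v / norm v | v. v \<in> Veta \<and> norm v \<noteq> 0}"

definition diff_set :: "'w::ab_group_add set \<Rightarrow> 'w set" where
  "diff_set Wt = {w1 - w2 | w1 w2. w1 \<in> Wt \<and> w2 \<in> Wt}"

end

theory Submission
  imports Defs "HOL-Library.Diagonal_Subsequence"
begin


definition hbg :: "('a::real_vector \<Rightarrow> real) \<Rightarrow> ('a \<times> real) set \<Rightarrow> bool" where
"hbg p G \<longleftrightarrow> G \<noteq> {} \<and> (\<forall>x a b. (x,a)\<in>G \<longrightarrow> (x,b)\<in>G \<longrightarrow> a=b)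
  \<and> (\<forall>x a y b. (x,a)\<in>G \<longrightarrow> (y,b)\<in>G \<longrightarrow> (x+y,a+b)\<in>G)
  \<and> (\<forall>x a c. (x,a)\<in>G \<longrightarrow> (c *\<^sub>R x, c*a)\<in>G) \<and> (\<forall>x a. (x,a)\<in>G \<longrightarrow> a \<le> p x)"

lemma hb_step:
  fixes p :: "'a::real_vector \<Rightarrow> real"
  assumes sub: "\<And>x y. p (x+y) \<le> p x + p y"
    and hom: "\<And>c x. c \<ge> 0 \<Longrightarrow> p (c *\<^sub>R x) = c * p x"
    and G: "hbg p G" and x0: "\<forall>a. (x0,a) \<notin> G"
  shows "\<exists>G'. hbg p G' \<and> G \<subseteq> G' \<and> G' \<noteq> G"
proof -
  have fn: "\<And>x a b. (x,a)\<in>G \<Longrightarrow> (x,b)\<in>G \<Longrightarrow> a=b"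
    and add: "\<And>x a y b. (x,a)\<in>G \<Longrightarrow> (y,b)\<in>G \<Longrightarrow> (x+y,a+b)\<in>G"
    and scl: "\<And>x a c. (x,a)\<in>G \<Longrightarrow> (c *\<^sub>R x, c*a)\<in>G"
    and dom: "\<And>x a. (x,a)\<in>G \<Longrightarrow> a \<le> p x" and ne: "G \<noteq> {}"
    using G unfolding hbg_def by blast+
  obtain x1 a1 where "(x1,a1) \<in> G" using ne by auto
  from scl[OF this, of 0] have zero: "(0,0) \<in> G" by simp
  define S where "S = {b - p (z - x0) | z b. (z,b)\<in>G}"
  define \<xi> where "\<xi> = Sup S"
  have key: "b - p (z - x0) \<le> p (z' + x0) - b'" if "(z,b)\<in>G" "(z',b')\<in>G" for z b z' b'
  proof -
    have "b + b' \<le> p (z + z')" using dom[OF add[OF that]] .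
    also have "z + z' = (z - x0) + (z' + x0)" by simp
    also have "p \<dots> \<le> p (z - x0) + p (z' + x0)" by (rule sub)
    finally show ?thesis by simp
  qed
  have Sne: "S \<noteq> {}" using zero unfolding S_def by blast
  have Sbdd: "bdd_above S" unfolding S_def bdd_above_def
    using key[OF _ zero] by auto
  have lo: "b - p (z - x0) \<le> \<xi>" if "(z,b)\<in>G" for z b
    unfolding \<xi>_def by (rule cSup_upper[OF _ Sbdd]) (use that S_def in blast)
  have hi: "\<xi> \<le> p (z + x0) - b" if "(z,b)\<in>G" for z b
    unfolding \<xi>_def by (rule cSup_least[OF Sne]) (use that key S_def in blast)
  define G' where "G' = {(y + t *\<^sub>R x0, a + t*\<xi>) | y a t. (y,a)\<in>G}"
  have sub1: "G \<subseteq> G'"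
  proof
    fix q assume "q \<in> G" then obtain y a where "q = (y,a)" "(y,a)\<in>G" by (cases q) auto
    moreover have "(y + 0 *\<^sub>R x0, a + 0*\<xi>) \<in> G'" unfolding G'_def using \<open>(y,a)\<in>G\<close> by blast
    ultimately show "q \<in> G'" by simp
  qed
  have "(0 + 1 *\<^sub>R x0, 0 + 1*\<xi>) \<in> G'" unfolding G'_def using zero by blast
  hence new: "(x0,\<xi>) \<in> G'" by simp
  have neq: "G' \<noteq> G" using new x0 by blast
  have "hbg p G'"
    unfolding hbg_def
  proof (intro conjI allI impI)
    show "G' \<noteq> {}" using new by blast
  next
    fix x a b assume "(x,a)\<in>G'" "(x,b)\<in>G'"
    then obtain y1 a1 t1 y2 a2 t2 where e: "x = y1 + t1 *\<^sub>R x0" "a = a1 + t1*\<xi>" "(y1,a1)\<in>G"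
      "x = y2 + t2 *\<^sub>R x0" "b = a2 + t2*\<xi>" "(y2,a2)\<in>G" unfolding G'_def by blast
    have m: "(y2 - y1, a2 - a1) \<in> G"
      using add[OF e(6) scl[OF e(3), of "-1"]] by simp
    have "t1 = t2"
    proof (rule ccontr)
      assume "t1 \<noteq> t2"
      have "y2 - y1 = (t1 - t2) *\<^sub>R x0" using e by (simp add: algebra_simps)
      hence "x0 = (1/(t1-t2)) *\<^sub>R (y2 - y1)" using \<open>t1 \<noteq> t2\<close> by simp
      with scl[OF m, of "1/(t1-t2)"] x0 show False by metis
    qed
    with e have "y1 = y2" by simp
    with e fn \<open>t1 = t2\<close> show "a = b" by metis
  next
    fix x a y b assume "(x,a)\<in>G'" "(y,b)\<in>G'"
    then obtain y1 a1 t1 y2 a2 t2 where e: "x = y1 + t1 *\<^sub>R x0" "a = a1 + t1*\<xi>" "(y1,a1)\<in>G"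
      "y = y2 + t2 *\<^sub>R x0" "b = a2 + t2*\<xi>" "(y2,a2)\<in>G" unfolding G'_def by blast
    have "x + y = (y1 + y2) + (t1+t2) *\<^sub>R x0" "a + b = (a1+a2) + (t1+t2)*\<xi>"
      using e by (simp_all add: algebra_simps)
    then show "(x+y,a+b)\<in>G'" unfolding G'_def using add[OF e(3) e(6)] by blast
  next
    fix x a c assume "(x,a)\<in>G'"
    then obtain y1 a1 t1 where e: "x = y1 + t1 *\<^sub>R x0" "a = a1 + t1*\<xi>" "(y1,a1)\<in>G"
      unfolding G'_def by blast
    have "c *\<^sub>R x = c *\<^sub>R y1 + (c*t1) *\<^sub>R x0" "c*a = c*a1 + (c*t1)*\<xi>"
      using e by (simp_all add: algebra_simps)
    then show "(c *\<^sub>R x, c*a)\<in>G'" unfolding G'_def using scl[OF e(3)] by blast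
  next
    fix x a assume "(x,a)\<in>G'"
    then obtain y a1 t where e: "x = y + t *\<^sub>R x0" "a = a1 + t*\<xi>" "(y,a1)\<in>G"
      unfolding G'_def by blast
    consider "t > 0" | "t = 0" | "t < 0" by linarith
    then show "a \<le> p x"
    proof cases
      case 1
      have "\<xi> \<le> p ((1/t) *\<^sub>R y + x0) - (1/t)*a1" using hi[OF scl[OF e(3), of "1/t"]] .
      hence "t*\<xi> + t*((1/t)*a1) \<le> t * p ((1/t) *\<^sub>R y + x0)" using 1
        by (metis add.commute le_diff_eq less_eq_real_def mult_left_mono ring_class.ring_distribs(1))
      hence "t*\<xi> \<le> t * p ((1/t) *\<^sub>R y + x0) - a1" using 1 by simp
      also have "t * p ((1/t) *\<^sub>R y + x0) = p (t *\<^sub>R ((1/t) *\<^sub>R y + x0))" using 1 hom by simp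
      also have "t *\<^sub>R ((1/t) *\<^sub>R y + x0) = x" using 1 e by (simp add: scaleR_add_right)
      finally show ?thesis using e by simp
    next
      case 2 with e dom show ?thesis by simp
    next
      case 3
      define s where "s = -t"
      have s: "s > 0" using 3 s_def by simp
      have "(1/s)*a1 - p ((1/s) *\<^sub>R y - x0) \<le> \<xi>" using lo[OF scl[OF e(3), of "1/s"]] .
      hence "s*((1/s)*a1) - s * p ((1/s) *\<^sub>R y - x0) \<le> s*\<xi>" using s
        by (metis less_eq_real_def mult_left_mono right_diff_distrib)
      hence "a1 - s * p ((1/s) *\<^sub>R y - x0) \<le> s*\<xi>" using s by simp
      also have "s * p ((1/s) *\<^sub>R y - x0) = p (s *\<^sub>R ((1/s) *\<^sub>R y - x0))" using s hom by simp
      also have "s *\<^sub>R ((1/s) *\<^sub>R y - x0) = x" using s e s_def by (simp add: scaleR_diff_right)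
      finally show ?thesis using e s_def by simp
    qed
  qed
  then show ?thesis using sub1 neq by blast
qed

lemma hahn_banach:
  fixes p :: "'a::real_vector \<Rightarrow> real"
  assumes sub: "\<And>x y. p (x+y) \<le> p x + p y"
    and hom: "\<And>c x. c \<ge> 0 \<Longrightarrow> p (c *\<^sub>R x) = c * p x"
    and G0: "hbg p G0"
  shows "\<exists>F. linear F \<and> (\<forall>x. F x \<le> p x) \<and> (\<forall>x a. (x,a)\<in>G0 \<longrightarrow> F x = a)"
proof -
  define A where "A = {G. hbg p G \<and> G0 \<subseteq> G}"
  have "\<exists>M\<in>A. \<forall>X\<in>A. M \<subseteq> X \<longrightarrow> X = M"
  proof (rule Zorn_Lemma2, intro ballI)
    fix C assume C: "C \<in> chains A"
    show "\<exists>U\<in>A. \<forall>X\<in>C. X \<subseteq> U"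
    proof (cases "C = {}")
      case True then show ?thesis using G0 A_def by auto
    next
      case False
      have CA: "C \<subseteq> A" and ch: "\<And>X Y. X\<in>C \<Longrightarrow> Y\<in>C \<Longrightarrow> X \<subseteq> Y \<or> Y \<subseteq> X"
        using C unfolding chains_def chain_subset_def by blast+
      have two: "\<exists>X\<in>C. q1 \<in> X \<and> q2 \<in> X" if "q1 \<in> \<Union>C" "q2 \<in> \<Union>C" for q1 q2
        using that ch by blast
      have hX: "hbg p X" if "X \<in> C" for X using that CA A_def by blast
      have "hbg p (\<Union>C)"
        unfolding hbg_def
      proof (intro conjI allI impI)
        show "\<Union>C \<noteq> {}" using False hX unfolding hbg_def by blast
      next
        fix x a b assume "(x,a)\<in>\<Union>C" "(x,b)\<in>\<Union>C"
        then obtain X where "X\<in>C" "(x,a)\<in>X" "(x,b)\<in>X" using two by blast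
        then show "a = b" using hX unfolding hbg_def by blast
      next
        fix x a y b assume "(x,a)\<in>\<Union>C" "(y,b)\<in>\<Union>C"
        then obtain X where "X\<in>C" "(x,a)\<in>X" "(y,b)\<in>X" using two by blast
        then show "(x+y,a+b) \<in> \<Union>C" using hX unfolding hbg_def by blast
      next
        fix x a c assume "(x,a)\<in>\<Union>C"
        then obtain X where "X\<in>C" "(x,a)\<in>X" by blast
        then show "(c *\<^sub>R x, c*a) \<in> \<Union>C" using hX unfolding hbg_def by blast
      next
        fix x a assume "(x,a)\<in>\<Union>C"
        then obtain X where "X\<in>C" "(x,a)\<in>X" by blast
        then show "a \<le> p x" using hX unfolding hbg_def by blast
      qed
      moreover have "G0 \<subseteq> \<Union>C" using False CA A_def by blast
      ultimately show ?thesis unfolding A_def by blast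
    qed
  qed
  then obtain M where MA: "M \<in> A" and Mmax: "\<And>X. X\<in>A \<Longrightarrow> M \<subseteq> X \<Longrightarrow> X = M" by blast
  have hM: "hbg p M" and G0M: "G0 \<subseteq> M" using MA A_def by auto
  have fn: "\<And>x a b. (x,a)\<in>M \<Longrightarrow> (x,b)\<in>M \<Longrightarrow> a=b"
    and add: "\<And>x a y b. (x,a)\<in>M \<Longrightarrow> (y,b)\<in>M \<Longrightarrow> (x+y,a+b)\<in>M"
    and scl: "\<And>x a c. (x,a)\<in>M \<Longrightarrow> (c *\<^sub>R x, c*a)\<in>M"
    and dom: "\<And>x a. (x,a)\<in>M \<Longrightarrow> a \<le> p x"
    using hM unfolding hbg_def by blast+
  have tot: "\<exists>a. (x,a) \<in> M" for x
  proof (rule ccontr)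
    assume "\<nexists>a. (x,a) \<in> M"
    then obtain G' where "hbg p G'" "M \<subseteq> G'" "G' \<noteq> M" using hb_step[OF sub hom hM] by blast
    moreover have "G' \<in> A" using calculation G0M A_def by blast
    ultimately show False using Mmax by blast
  qed
  define F where "F x = (THE a. (x,a) \<in> M)" for x
  have FM: "(x, F x) \<in> M" for x
    unfolding F_def by (rule theI') (use tot fn in blast)
  have Fe: "F x = a" if "(x,a)\<in>M" for x a using fn[OF FM that] .
  have "linear F"
    by (rule linearI) (auto intro: Fe add scl FM)
  moreover have "\<forall>x. F x \<le> p x" using dom FM by blast
  moreover have "\<forall>x a. (x,a)\<in>G0 \<longrightarrow> F x = a" using G0M Fe by blast
  ultimately show ?thesis by blast
qed


lemma hb_norm:
  fixes G0 :: "('a::real_normed_vector \<times> real) set"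
  assumes "hbg norm G0"
  shows "\<exists>f::'a \<Rightarrow>\<^sub>L real. norm f \<le> 1 \<and> (\<forall>x a. (x,a)\<in>G0 \<longrightarrow> blinfun_apply f x = a)"
proof -
  obtain F where F: "linear F" "\<forall>x. F x \<le> norm x" "\<forall>x a. (x,a)\<in>G0 \<longrightarrow> F x = a"
    using hahn_banach[of norm G0] assms norm_triangle_ineq by fastforce
  have ab: "\<bar>F x\<bar> \<le> norm x" for x
  proof -
    have "- F x = F (- x)" using F(1) by (simp add: linear_neg)
    also have "\<dots> \<le> norm x" using F(2)[rule_format, of "-x"] by simp
    finally have "- F x \<le> norm x" .
    moreover have "F x \<le> norm x" using F(2) by blast
    ultimately show ?thesis by linarith
  qed
  have bl: "bounded_linear F"
    by (rule bounded_linear_intro[where K=1]) (use F(1) ab in \<open>auto simp: linear_add linear_scale\<close>)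
  show ?thesis
    apply (rule exI[of _ "Blinfun F"])
    using bl ab F(3) by (auto simp: bounded_linear_Blinfun_apply intro!: norm_blinfun_bound)
qed

lemma norming_functional:
  fixes e :: "'a::real_normed_vector"
  shows "\<exists>f::'a \<Rightarrow>\<^sub>L real. norm f \<le> 1 \<and> blinfun_apply f e = norm e"
proof -
  define G0 where "G0 = {(t *\<^sub>R e, t * norm e) | t. True}"
  have "hbg norm G0" unfolding hbg_def G0_def
  proof (intro conjI allI impI)
    fix x a b assume "(x, a) \<in> {(t *\<^sub>R e, t * norm e) |t. True}" "(x, b) \<in> {(t *\<^sub>R e, t * norm e) |t. True}"
    then obtain t1 t2 where "x = t1 *\<^sub>R e" "a = t1 * norm e" "x = t2 *\<^sub>R e" "b = t2 * norm e" by blast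
    then show "a = b" by (cases "e = 0") auto
  next
    fix x a y b assume "(x, a) \<in> {(t *\<^sub>R e, t * norm e) |t. True}" "(y, b) \<in> {(t *\<^sub>R e, t * norm e) |t. True}"
    then obtain t1 t2 where "x = t1 *\<^sub>R e" "a = t1 * norm e" "y = t2 *\<^sub>R e" "b = t2 * norm e" by blast
    then have "(x+y, a+b) = ((t1+t2) *\<^sub>R e, (t1+t2) * norm e)" by (simp add: algebra_simps)
    then show "(x+y, a+b) \<in> {(t *\<^sub>R e, t * norm e) |t. True}" by blast
  next
    fix x a c assume "(x, a) \<in> {(t *\<^sub>R e, t * norm e) |t. True}"
    then obtain t1 where "x = t1 *\<^sub>R e" "a = t1 * norm e" by blast
    then have "(c *\<^sub>R x, c*a) = ((c*t1) *\<^sub>R e, (c*t1) * norm e)" by simp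
    then show "(c *\<^sub>R x, c*a) \<in> {(t *\<^sub>R e, t * norm e) |t. True}" by blast
  next
    fix x a assume "(x, a) \<in> {(t *\<^sub>R e, t * norm e) |t. True}"
    then obtain t1 where "x = t1 *\<^sub>R e" "a = t1 * norm e" by blast
    then show "a \<le> norm x" by (simp add: mult_right_mono)
  qed auto
  from hb_norm[OF this] obtain f :: "'a \<Rightarrow>\<^sub>L real" where "norm f \<le> 1" "\<forall>x a. (x,a)\<in>G0 \<longrightarrow> f x = a" by blast
  moreover have "(1 *\<^sub>R e, 1 * norm e) \<in> G0" unfolding G0_def by blast
  ultimately show ?thesis by auto
qed

lemma separating_functional:
  fixes Z :: "'a::real_normed_vector set"
  assumes Z: "subspace Z" "closed Z" and g: "g \<notin> Z"
  shows "\<exists>f::'a \<Rightarrow>\<^sub>L real. (\<forall>z\<in>Z. blinfun_apply f z = 0) \<and> blinfun_apply f g \<noteq> 0"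
proof -
  have Z0: "0 \<in> Z" and Zadd: "\<And>x y. x\<in>Z \<Longrightarrow> y\<in>Z \<Longrightarrow> x+y \<in> Z"
    and Zscl: "\<And>c x. x\<in>Z \<Longrightarrow> c *\<^sub>R x \<in> Z" using Z(1) unfolding subspace_def by auto
  define d where "d = infdist g Z"
  have d: "d > 0" unfolding d_def using infdist_pos_not_in_closed[OF Z(2) _ g] Z0 by blast
  define G0 where "G0 = {(z + t *\<^sub>R g, t * d) | z t. z \<in> Z}"
  have "hbg norm G0" unfolding hbg_def
  proof (intro conjI allI impI)
    show "G0 \<noteq> {}" unfolding G0_def using Z0 by blast
  next
    fix x a b assume "(x, a) \<in> G0" "(x, b) \<in> G0"
    then obtain z1 t1 z2 t2 where e: "x = z1 + t1 *\<^sub>R g" "a = t1 * d" "z1 \<in> Z"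
      "x = z2 + t2 *\<^sub>R g" "b = t2 * d" "z2\<in>Z" unfolding G0_def by blast
    have "t1 = t2"
    proof (rule ccontr)
      assume ne: "t1 \<noteq> t2"
      have "(t1 - t2) *\<^sub>R g = z2 - z1" using e by (simp add: algebra_simps)
      hence "(1/(t1-t2)) *\<^sub>R ((t1 - t2) *\<^sub>R g) = (1/(t1-t2)) *\<^sub>R (z2 - z1)" by simp
      hence "g = (1/(t1-t2)) *\<^sub>R (z2 + (-1) *\<^sub>R z1)" using ne by simp
      moreover have "(1/(t1-t2)) *\<^sub>R (z2 + (-1) *\<^sub>R z1) \<in> Z" using e Zadd Zscl by blast
      ultimately show False using g by simp
    qed
    then show "a = b" using e by simp
  next
    fix x a y b assume "(x, a) \<in> G0" "(y, b) \<in> G0"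
    then obtain z1 t1 z2 t2 where e: "x = z1 + t1 *\<^sub>R g" "a = t1 * d" "z1 \<in> Z"
      "y = z2 + t2 *\<^sub>R g" "b = t2 * d" "z2\<in>Z" unfolding G0_def by blast
    then have "(x+y, a+b) = ((z1+z2) + (t1+t2) *\<^sub>R g, (t1+t2) * d)" by (simp add: algebra_simps)
    then show "(x+y, a+b) \<in> G0" unfolding G0_def using Zadd e by blast
  next
    fix x a c assume "(x, a) \<in> G0"
    then obtain z1 t1 where e: "x = z1 + t1 *\<^sub>R g" "a = t1 * d" "z1 \<in> Z" unfolding G0_def by blast
    then have "(c *\<^sub>R x, c*a) = (c *\<^sub>R z1 + (c*t1) *\<^sub>R g, (c*t1) * d)" by (simp add: algebra_simps)
    then show "(c *\<^sub>R x, c*a) \<in> G0" unfolding G0_def using Zscl e by blast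
  next
    fix x a assume "(x, a) \<in> G0"
    then obtain z t where e: "x = z + t *\<^sub>R g" "a = t * d" "z \<in> Z" unfolding G0_def by blast
    show "a \<le> norm x"
    proof (cases "t = 0")
      case True then show ?thesis using e by simp
    next
      case False
      have "(-1/t) *\<^sub>R z \<in> Z" using Zscl e by blast
      hence "d \<le> dist g ((-1/t) *\<^sub>R z)" unfolding d_def by (rule infdist_le)
      also have "dist g ((-1/t) *\<^sub>R z) = norm ((1/t) *\<^sub>R x)"
        using False e by (simp add: dist_norm algebra_simps)
      also have "\<dots> = norm x / \<bar>t\<bar>" by simp
      finally have "\<bar>t\<bar> * d \<le> norm x" using False by (simp add: field_simps)
      moreover have "t * d \<le> \<bar>t\<bar> * d" using d by (simp add: mult_right_mono)
      ultimately show ?thesis using e by simp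
    qed
  qed
  from hb_norm[OF this] obtain f :: "'a \<Rightarrow>\<^sub>L real" where f: "\<forall>x a. (x,a)\<in>G0 \<longrightarrow> f x = a" by blast
  have "\<forall>z\<in>Z. f z = 0"
  proof
    fix z assume "z \<in> Z"
    hence "(z + 0 *\<^sub>R g, 0 * d) \<in> G0" unfolding G0_def by blast
    then show "f z = 0" using f by auto
  qed
  moreover have "(0 + 1 *\<^sub>R g, 1 * d) \<in> G0" unfolding G0_def using Z0 by blast
  hence "f g = d" using f by auto
  ultimately show ?thesis using d by auto
qed



lemma weak_subseq:
  fixes x :: "nat \<Rightarrow> 'a::real_normed_vector"
  assumes refl: "reflexive_space TYPE('a)" and sep: "separable_type TYPE('a)"
    and bd: "bounded (range x)"
  shows "\<exists>r ub. strict_mono r \<and> weakly_converges_to (x \<circ> r) ub"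
proof -
  obtain B where B0: "B > 0" "\<forall>y\<in>range x. norm y \<le> B" using bd unfolding bounded_pos by auto
  hence B: "B > 0" "\<And>n. norm (x n) \<le> B" by auto
  obtain D :: "'a set" where D: "countable D" "closure D = UNIV"
    using sep unfolding separable_type_def by auto
  have Dne: "D \<noteq> {}" using D by (metis closure_empty empty_not_UNIV)
  define e where "e = from_nat_into D"
  have rangee: "range e = D" unfolding e_def using Dne D(1) by (rule range_from_nat_into)
  have "\<forall>k. \<exists>g::'a \<Rightarrow>\<^sub>L real. norm g \<le> 1 \<and> blinfun_apply g (e k) = norm (e k)"
    using norming_functional by blast
  from choice[OF this] obtain f :: "nat \<Rightarrow> ('a \<Rightarrow>\<^sub>L real)" where
    "\<forall>k. norm (f k) \<le> 1 \<and> blinfun_apply (f k) (e k) = norm (e k)" by blast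
  hence f: "\<And>k. norm (f k) \<le> 1" "\<And>k. blinfun_apply (f k) (e k) = norm (e k)" by auto
  have gbd: "\<bar>blinfun_apply g (x n)\<bar> \<le> norm g * B" for g n
  proof -
    have "\<bar>blinfun_apply g (x n)\<bar> \<le> norm g * norm (x n)" using norm_blinfun[of g "x n"] by simp
    also have "\<dots> \<le> norm g * B" using B by (simp add: mult_left_mono)
    finally show ?thesis .
  qed
  interpret S: subseqs "\<lambda>k s. convergent (\<lambda>n. blinfun_apply (f k) (x (s n)))"
  proof
    fix k and s :: "nat \<Rightarrow> nat" assume "strict_mono s"
    have "bounded (range (\<lambda>n. blinfun_apply (f k) (x (s n))))"
      unfolding bounded_iff using gbd by (auto intro!: exI[of _ "norm (f k) * B"])
    from bounded_imp_convergent_subsequence[OF this] obtain l r where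
      r: "strict_mono r" "((\<lambda>n. blinfun_apply (f k) (x (s n))) \<circ> r) \<longlonglongrightarrow> l" by blast
    have "convergent (\<lambda>n. blinfun_apply (f k) (x ((s \<circ> r) n)))"
      using r(2) unfolding convergent_def o_def by blast
    then show "\<exists>r'. strict_mono r' \<and> convergent (\<lambda>n. blinfun_apply (f k) (x ((s \<circ> r') n)))"
      using r(1) by blast
  qed
  define r where "r = S.diagseq"
  have rmono: "strict_mono r" unfolding r_def by (rule S.subseq_diagseq)
  have conv: "convergent (\<lambda>n. blinfun_apply (f k) (x (r n)))" for k
  proof -
    have "convergent (\<lambda>n. blinfun_apply (f k) (x ((S.diagseq \<circ> (+) (Suc k)) n)))"
    proof (rule S.diagseq_holds)
      fix r' s n assume "strict_mono (r'::nat\<Rightarrow>nat)" "convergent (\<lambda>m. blinfun_apply (f n) (x (s m)))"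
      from convergent_subseq_convergent[OF this(2) this(1)]
      show "convergent (\<lambda>m. blinfun_apply (f n) (x ((s \<circ> r') m)))" by (simp add: o_def)
    qed
    then obtain l where "(\<lambda>n. blinfun_apply (f k) (x (r (n + Suc k)))) \<longlonglongrightarrow> l"
      unfolding convergent_def r_def by (auto simp: o_def add.commute)
    then have "(\<lambda>n. blinfun_apply (f k) (x (r n))) \<longlonglongrightarrow> l" by (rule LIMSEQ_offset)
    then show ?thesis unfolding convergent_def by blast
  qed
  define Z where "Z = {g :: 'a \<Rightarrow>\<^sub>L real. convergent (\<lambda>n. blinfun_apply g (x (r n)))}"
  have fZ: "f k \<in> Z" for k using conv Z_def by blast
  have subZ: "subspace Z"
    unfolding subspace_def Z_def
  proof (intro conjI ballI allI)
    show "0 \<in> {g. convergent (\<lambda>n. blinfun_apply g (x (r n)))}" by (simp add: convergent_const)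
  next
    fix g h assume "g \<in> {g :: 'a \<Rightarrow>\<^sub>L real. convergent (\<lambda>n. blinfun_apply g (x (r n)))}"
      "h \<in> {g :: 'a \<Rightarrow>\<^sub>L real. convergent (\<lambda>n. blinfun_apply g (x (r n)))}"
    then show "g + h \<in> {g. convergent (\<lambda>n. blinfun_apply g (x (r n)))}"
      by (simp add: plus_blinfun.rep_eq convergent_add)
  next
    fix c :: real and g assume "g \<in> {g :: 'a \<Rightarrow>\<^sub>L real. convergent (\<lambda>n. blinfun_apply g (x (r n)))}"
    then obtain l where "(\<lambda>n. blinfun_apply g (x (r n))) \<longlonglongrightarrow> l" by (auto simp: convergent_def)
    then have "(\<lambda>n. c * blinfun_apply g (x (r n))) \<longlonglongrightarrow> c * l" by (intro tendsto_intros)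
    then show "c *\<^sub>R g \<in> {g. convergent (\<lambda>n. blinfun_apply g (x (r n)))}"
      by (auto simp: scaleR_blinfun.rep_eq convergent_def)
  qed
  have clZ: "closed Z"
  proof -
    have "g \<in> Z" if app: "\<forall>\<epsilon>>0. \<exists>h\<in>Z. dist h g < \<epsilon>" for g
    proof -
      have "Cauchy (\<lambda>n. blinfun_apply g (x (r n)))"
      proof (rule metric_CauchyI)
        fix \<epsilon> :: real assume \<epsilon>: "\<epsilon> > 0"
        have "\<epsilon> / (3 * B) > 0" using \<epsilon> B by simp
        then obtain h where h: "h \<in> Z" "dist h g < \<epsilon> / (3 * B)" using app by blast
        have "Cauchy (\<lambda>n. blinfun_apply h (x (r n)))" using h Z_def convergent_Cauchy by blast
        then obtain N where N: "\<And>m n. m \<ge> N \<Longrightarrow> n \<ge> N \<Longrightarrow> dist (blinfun_apply h (x (r m))) (blinfun_apply h (x (r n))) < \<epsilon>/3"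
          using metric_CauchyD[OF \<open>Cauchy (\<lambda>n. blinfun_apply h (x (r n)))\<close>, of "\<epsilon>/3"] \<epsilon> by auto
        have hg: "\<bar>blinfun_apply g (x k) - blinfun_apply h (x k)\<bar> < \<epsilon>/3" for k
        proof -
          have "\<bar>blinfun_apply g (x k) - blinfun_apply h (x k)\<bar> = \<bar>blinfun_apply (g - h) (x k)\<bar>"
            by (simp add: minus_blinfun.rep_eq)
          also have "\<dots> \<le> norm (g - h) * B" by (rule gbd)
          also have "\<dots> < \<epsilon> / (3 * B) * B"
          proof (rule mult_strict_right_mono)
            show "norm (g - h) < \<epsilon> / (3 * B)" using h by (simp add: dist_norm norm_minus_commute)
          qed (use B in auto)
          also have "\<dots> = \<epsilon>/3" using B by simp
          finally show ?thesis .
        qed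
        show "\<exists>M. \<forall>m\<ge>M. \<forall>n\<ge>M. dist (blinfun_apply g (x (r m))) (blinfun_apply g (x (r n))) < \<epsilon>"
        proof (intro exI allI impI)
          fix m n assume "N \<le> m" "N \<le> n"
          from N[OF this] hg[of "r m"] hg[of "r n"]
          show "dist (blinfun_apply g (x (r m))) (blinfun_apply g (x (r n))) < \<epsilon>"
            unfolding dist_real_def by linarith
        qed
      qed
      then show ?thesis unfolding Z_def using Cauchy_convergent_iff by blast
    qed
    then have "closure Z \<subseteq> Z" by (auto simp: closure_approachable)
    then show ?thesis by (simp add: closure_subset_eq)
  qed
  have ZU: "Z = UNIV"
  proof (rule ccontr)
    assume "Z \<noteq> UNIV"
    then obtain g where "g \<notin> Z" by blast
    from separating_functional[OF subZ clZ this] obtain \<Phi> :: "('a \<Rightarrow>\<^sub>L real) \<Rightarrow>\<^sub>L real"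
      where \<Phi>: "\<forall>z\<in>Z. \<Phi> z = 0" "\<Phi> g \<noteq> 0" by blast
    obtain w where w: "\<And>h. \<Phi> h = blinfun_apply h w" using refl unfolding reflexive_space_def by blast
    have fw: "blinfun_apply (f k) w = 0" for k
    proof -
      have "\<Phi> (f k) = 0" using \<Phi>(1) fZ by blast
      then show ?thesis using w by simp
    qed
    have nw2: "norm w \<le> 2 * \<epsilon>" if eps: "\<epsilon> > 0" for \<epsilon>
    proof -
      have "w \<in> closure D" using D by simp
      then obtain d where "d \<in> D" "dist d w < \<epsilon>" using eps unfolding closure_approachable by blast
      then obtain k where k: "dist (e k) w < \<epsilon>" using rangee by blast
      have "norm (e k) = blinfun_apply (f k) (e k) - blinfun_apply (f k) w" using f fw by simp
      also have "\<dots> = blinfun_apply (f k) (e k - w)" by (simp add: blinfun.diff_right)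
      also have "\<dots> \<le> norm (f k) * norm (e k - w)"
        using norm_blinfun[of "f k" "e k - w"] by simp
      also have "\<dots> \<le> norm (e k - w)" using f(1)[of k] by (simp add: mult_left_le_one_le)
      finally have "norm (e k) < \<epsilon>" using k by (simp add: dist_norm)
      moreover have "norm w \<le> norm (e k) + norm (w - e k)"
        using norm_triangle_ineq[of "e k" "w - e k"] by simp
      moreover have "norm (w - e k) = norm (e k - w)" by (rule norm_minus_commute)
      ultimately show ?thesis using k by (simp add: dist_norm)
    qed
    have "norm w \<le> 0 + \<epsilon>" if "\<epsilon> > 0" for \<epsilon>
    proof -
      have "norm w \<le> 2 * (\<epsilon>/2)" using that by (intro nw2) simp
      then show ?thesis by simp
    qed
    hence "norm w \<le> 0" by (rule field_le_epsilon)
    hence "w = 0" by simp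
    then show False using \<Phi>(2) w by simp
  qed
  define L where "L g = lim (\<lambda>n. blinfun_apply g (x (r n)))" for g :: "'a \<Rightarrow>\<^sub>L real"
  have Lt: "(\<lambda>n. blinfun_apply g (x (r n))) \<longlonglongrightarrow> L g" for g
  proof -
    have "convergent (\<lambda>n. blinfun_apply g (x (r n)))" using ZU unfolding Z_def by auto
    then show ?thesis unfolding L_def by (simp add: convergent_LIMSEQ_iff)
  qed
  have blL: "bounded_linear L"
  proof (rule bounded_linear_intro[where K=B])
    fix g h show "L (g + h) = L g + L h"
      using tendsto_add[OF Lt[of g] Lt[of h]] Lt[of "g+h"]
      by (simp add: plus_blinfun.rep_eq LIMSEQ_unique)
  next
    fix c :: real and g show "L (c *\<^sub>R g) = c *\<^sub>R L g"
      using tendsto_mult[OF tendsto_const[of c] Lt[of g]] Lt[of "c *\<^sub>R g"]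
      by (simp add: scaleR_blinfun.rep_eq LIMSEQ_unique)
  next
    fix g
    show "norm (L g) \<le> norm g * B"
      using Lim_bounded[OF tendsto_rabs[OF Lt[of g]], of 0 "norm g * B"] gbd[of g] by auto
  qed
  obtain ub where ub: "\<And>g. blinfun_apply (Blinfun L) g = blinfun_apply g ub"
    using refl unfolding reflexive_space_def by blast
  have "weakly_converges_to (x \<circ> r) ub"
    unfolding weakly_converges_to_def
  proof
    fix g :: "'a \<Rightarrow>\<^sub>L real"
    have "L g = blinfun_apply g ub" using ub[of g] blL by (simp add: bounded_linear_Blinfun_apply)
    then show "(\<lambda>n. blinfun_apply g ((x \<circ> r) n)) \<longlonglongrightarrow> blinfun_apply g ub" using Lt[of g] by (simp add: o_def)
  qed
  then show ?thesis using rmono by blast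
qed



theorem mainTheorem6:
  fixes A :: "'w::banach \<Rightarrow> 'v::banach \<Rightarrow> real"
    and F :: "'v \<Rightarrow> real"
    and u :: 'w
    and M :: real
    and Wt :: "'w set"
    and Veta :: "'v set"
    and R :: "'v \<Rightarrow> ('w \<Rightarrow>\<^sub>L real)"
    and \<alpha> Mstar \<kappa> :: real
    and J :: "'w \<Rightarrow> real"
    and c C :: real
  assumes reflW: "reflexive_space TYPE('w)" and sepW: "separable_type TYPE('w)"
    and reflV: "reflexive_space TYPE('v)" and sepV: "separable_type TYPE('v)"
    and A_bilin: "bilinear A"
    and A_bound: "\<forall>w v. A w v \<le> M * norm w * norm v"
    and F_lin: "bounded_linear F"
    and u_sol: "\<forall>v. A u v = F v"
    and u_unique: "\<forall>w. (\<forall>v. A w v = F v) \<longrightarrow> w = u"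
    and Veta_nz: "\<exists>v\<in>Veta. norm v \<noteq> 0"
    and R_lin: "linear R"
    and pos: "\<alpha> > 0" "Mstar > 0" "\<kappa> > 0"
    and infsup: "\<forall>w. w \<noteq> 0 \<longrightarrow>
        Sup {blinfun_apply (R v) w / (norm w * norm v) | v. v \<noteq> 0} \<ge> \<alpha>"
    and R_bound: "\<forall>v. norm (R v) \<le> Mstar * norm v"
    and disc_infsup: "\<forall>w \<in> Wt \<union> diff_set Wt. \<kappa> * norm w \<le> op_norm_eta A Veta w"
    and cC: "0 < c" "c \<le> C"
    and J_equiv: "\<forall>w. c * op_norm_eta A Veta w \<le> J w \<and> J w \<le> C * op_norm_eta A Veta w"
  shows "(\<forall>(wt :: nat \<Rightarrow> 'w) ub.
            (\<forall>n. wt n \<in> Wt)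
          \<and> (\<lambda>n. J (u - wt n)) \<longlonglongrightarrow> Inf ((\<lambda>w. J (u - w)) ` Wt)
          \<and> weakly_converges_to wt ub
          \<longrightarrow> norm (u - ub) \<le> (1 + 2 * (C / c) * (Mstar / \<alpha>) * (M / \<kappa>))
                                  * Inf ((\<lambda>w. norm (u - w)) ` Wt))
       \<and> (\<forall>wt :: nat \<Rightarrow> 'w.
            (\<forall>n. wt n \<in> Wt)
          \<and> (\<lambda>n. J (u - wt n)) \<longlonglongrightarrow> Inf ((\<lambda>w. J (u - w)) ` Wt)
          \<longrightarrow> bounded (range wt)
            \<and> (\<exists>r ub. strict_mono r \<and> weakly_converges_to (wt \<circ> r) ub))"
proof -
  define opn where "opn = op_norm_eta A Veta"
  define SS where "SS w = {A w v / norm v | v. v \<in> Veta \<and> norm v \<noteq> 0}" for w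
  have opS: "opn w = Sup (SS w)" for w unfolding opn_def op_norm_eta_def SS_def by simp
  have linA: "linear (\<lambda>x. A x v)" for v using A_bilin unfolding bilinear_def by blast
  have Aadd: "A (a + b) v = A a v + A b v" for a b v using linear_add[OF linA] by simp
  have Aneg: "A (- a) v = - A a v" for a v using linear_neg[OF linA] by simp
  obtain v0 where v0: "v0 \<in> Veta" "norm v0 \<noteq> 0" using Veta_nz by blast
  have SSne: "SS w \<noteq> {}" for w unfolding SS_def using v0 by blast
  have elb: "A w v / norm v \<le> M * norm w" if "norm v \<noteq> 0" for w v
  proof -
    have "norm v > 0" using that by simp
    moreover have "A w v \<le> M * norm w * norm v" using A_bound by blast
    ultimately show ?thesis by (simp add: pos_divide_le_eq)
  qed
  have SSbdd: "bdd_above (SS w)" for w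
    unfolding SS_def bdd_above_def using elb by blast
  have op_up: "opn w \<le> M * norm w" for w
    unfolding opS by (rule cSup_least[OF SSne]) (use elb SS_def in auto)
  have op_el: "A w v / norm v \<le> opn w" if "v \<in> Veta" "norm v \<noteq> 0" for w v
    unfolding opS by (rule cSup_upper[OF _ SSbdd]) (use that SS_def in blast)
  have op_sub: "opn (a + b) \<le> opn a + opn b" for a b
    unfolding opS[of "a+b"]
  proof (rule cSup_least[OF SSne])
    fix t assume "t \<in> SS (a + b)"
    then obtain v where v: "t = A (a+b) v / norm v" "v \<in> Veta" "norm v \<noteq> 0" unfolding SS_def by blast
    have "t = A a v / norm v + A b v / norm v" using v(1) Aadd by (simp add: add_divide_distrib)
    also have "\<dots> \<le> opn a + opn b" using op_el[OF v(2,3)] by (intro add_mono)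
    finally show "t \<le> opn a + opn b" .
  qed
  have diffI: "w1 - w2 \<in> diff_set Wt" if "w1 \<in> Wt" "w2 \<in> Wt" for w1 w2
    unfolding diff_set_def using that by blast
  have kap: "\<kappa> * norm (w1 - w2) \<le> opn (w1 - w2)" if "w1 \<in> Wt" "w2 \<in> Wt" for w1 w2
    using disc_infsup diffI[OF that] unfolding opn_def by blast
  have Jlo: "c * opn w \<le> J w" and Jhi: "J w \<le> C * opn w" for w using J_equiv opn_def by auto
  have Mnn: "M \<ge> 0" if "w \<noteq> 0" for w :: 'w
  proof -
    have "A w v0 \<le> M * norm w * norm v0" using A_bound by blast
    moreover have "A (-w) v0 \<le> M * norm (-w) * norm v0" using A_bound by blast
    ultimately have "0 \<le> 2 * (M * (norm w * norm v0))" using Aneg[of w v0] by (simp add: mult.assoc)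
    moreover have "norm w * norm v0 > 0" using that v0 by simp
    ultimately show ?thesis by (simp add: zero_le_mult_iff)
  qed
  define Lm where "Lm = Inf ((\<lambda>w. J (u - w)) ` Wt)"
  have seqbd: "\<kappa> * norm (w0 - wt n) \<le> J (u - wt n) / c + M * norm (u - w0)"
    if "w0 \<in> Wt" "wt n \<in> Wt" for w0 wt n
  proof -
    have "\<kappa> * norm (w0 - wt n) \<le> opn (w0 - wt n)" using kap that by blast
    also have "w0 - wt n = (u - wt n) + (w0 - u)" by simp
    also have "opn \<dots> \<le> opn (u - wt n) + opn (w0 - u)" by (rule op_sub)
    also have "opn (u - wt n) \<le> J (u - wt n) / c" using Jlo[of "u - wt n"] cC by (simp add: pos_le_divide_eq mult.commute)
    also have "opn (w0 - u) \<le> M * norm (u - w0)" using op_up[of "w0 - u"] by (simp add: norm_minus_commute)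
    finally show ?thesis by simp
  qed
  have Lm_le: "Lm \<le> J (u - w0)" if "w0 \<in> Wt" "w1 \<in> Wt" for w0 w1
  proof -
    have "bdd_below ((\<lambda>w. J (u - w)) ` Wt)"
    proof (rule bdd_belowI2)
      fix w assume "w \<in> Wt"
      have "0 \<le> \<kappa> * norm (w1 - w)" using pos by simp
      also have "\<dots> \<le> opn (w1 - w)" using kap \<open>w \<in> Wt\<close> that by blast
      also have "w1 - w = (u - w) + (w1 - u)" by simp
      also have "opn \<dots> \<le> opn (u - w) + opn (w1 - u)" by (rule op_sub)
      also have "opn (w1 - u) \<le> M * norm (w1 - u)" by (rule op_up)
      finally have "- (M * norm (w1 - u)) \<le> opn (u - w)" by simp
      hence "c * (- (M * norm (w1 - u))) \<le> c * opn (u - w)" by (rule mult_left_mono) (use cC in auto)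
      also have "\<dots> \<le> J (u - w)" by (rule Jlo)
      finally show "c * (- (M * norm (w1 - u))) \<le> J (u - w)" .
    qed
    then show ?thesis unfolding Lm_def by (rule cINF_lower) (use that in blast)
  qed
  have part1: "norm (u - ub) \<le> (1 + 2 * (C / c) * (Mstar / \<alpha>) * (M / \<kappa>)) * Inf ((\<lambda>w. norm (u - w)) ` Wt)"
    if wtW: "\<forall>n. wt n \<in> Wt" and wtL: "(\<lambda>n. J (u - wt n)) \<longlonglongrightarrow> Lm"
      and wk: "weakly_converges_to wt ub" for wt ub
  proof -
    have core: "norm (u - ub) \<le> norm (u - w0) + (Mstar / \<alpha>) * (((C/c) * M * norm (u - w0) + M * norm (u - w0)) / \<kappa>)"
      if w0: "w0 \<in> Wt" for w0
    proof -
      define b where "b n = (J (u - wt n) / c + M * norm (u - w0)) / \<kappa>" for n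
      define binf where "binf = (Lm / c + M * norm (u - w0)) / \<kappa>"
      have bt: "b \<longlonglongrightarrow> binf" unfolding b_def binf_def by (intro tendsto_intros wtL) (use pos cC in auto)
      have nb: "norm (w0 - wt n) \<le> b n" for n
        using seqbd[of w0 wt n, OF w0 wtW[rule_format, of n]] pos unfolding b_def by (simp add: pos_le_divide_eq mult.commute)
      have binf_nn: "0 \<le> binf"
      proof (rule Lim_bounded2[OF bt, of 0])
        show "\<forall>n\<ge>0. 0 \<le> b n"
        proof (intro allI impI)
          fix n :: nat show "0 \<le> b n" using nb[of n] norm_ge_zero[of "w0 - wt n"] by linarith
        qed
      qed
      have "Lm \<le> J (u - w0)" using Lm_le w0 by blast
      also have "\<dots> \<le> C * opn (u - w0)" by (rule Jhi)
      also have "\<dots> \<le> C * (M * norm (u - w0))" using op_up cC by (intro mult_left_mono) auto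
      finally have Lmb: "Lm / c \<le> (C/c) * M * norm (u - w0)" using cC by (simp add: divide_right_mono)
      have binfb: "binf \<le> ((C/c) * M * norm (u - w0) + M * norm (u - w0)) / \<kappa>"
        unfolding binf_def using Lmb pos by (simp add: divide_right_mono)
      have yb: "norm (w0 - ub) \<le> Mstar * binf / \<alpha>"
      proof (cases "w0 - ub = 0")
        case True then show ?thesis using binf_nn pos by simp
      next
        case False
        define y where "y = w0 - ub"
        have ny: "norm y > 0" using False y_def by simp
        have vb: "blinfun_apply (R v) y / (norm y * norm v) \<le> Mstar * binf / norm y" if "v \<noteq> 0" for v
        proof -
          have t1: "(\<lambda>n. blinfun_apply (R v) (w0 - wt n)) \<longlonglongrightarrow> blinfun_apply (R v) y"
          proof -
            have "(\<lambda>n. blinfun_apply (R v) (wt n)) \<longlonglongrightarrow> blinfun_apply (R v) ub"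
              using wk unfolding weakly_converges_to_def by blast
            then have "(\<lambda>n. blinfun_apply (R v) w0 - blinfun_apply (R v) (wt n)) \<longlonglongrightarrow> blinfun_apply (R v) w0 - blinfun_apply (R v) ub"
              by (rule tendsto_diff[OF tendsto_const])
            then show ?thesis by (simp add: y_def blinfun.diff_right)
          qed
          have t2: "(\<lambda>n. Mstar * norm v * b n) \<longlonglongrightarrow> Mstar * norm v * binf" by (intro tendsto_intros bt)
          have le: "blinfun_apply (R v) (w0 - wt n) \<le> Mstar * norm v * b n" for n
          proof -
            have "blinfun_apply (R v) (w0 - wt n) \<le> norm (R v) * norm (w0 - wt n)"
              using norm_blinfun[of "R v" "w0 - wt n"] by simp
            also have "\<dots> \<le> (Mstar * norm v) * b n"
              using R_bound nb pos by (intro mult_mono) auto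
            finally show ?thesis .
          qed
          have "blinfun_apply (R v) y \<le> Mstar * norm v * binf"
            by (rule LIMSEQ_le[OF t1 t2]) (use le in blast)
          then have "blinfun_apply (R v) y / (norm y * norm v) \<le> Mstar * norm v * binf / (norm y * norm v)"
            using ny that by (intro divide_right_mono) auto
          also have "\<dots> = Mstar * binf / norm y" using that by simp
          finally show ?thesis .
        qed
        have "y \<noteq> 0" using False y_def by simp
        hence "\<alpha> \<le> Sup {blinfun_apply (R v) y / (norm y * norm v) | v. v \<noteq> 0}" using infsup by blast
        also have "\<dots> \<le> Mstar * binf / norm y"
        proof (rule cSup_least)
          have "v0 \<noteq> 0" using v0 by auto
          then have "blinfun_apply (R v0) y / (norm y * norm v0) \<in> {blinfun_apply (R v) y / (norm y * norm v) | v. v \<noteq> 0}"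
            by blast
          then show "{blinfun_apply (R v) y / (norm y * norm v) | v. v \<noteq> 0} \<noteq> {}" by blast
        next
          fix t assume "t \<in> {blinfun_apply (R v) y / (norm y * norm v) | v. v \<noteq> 0}"
          then obtain v where "v \<noteq> 0" "t = blinfun_apply (R v) y / (norm y * norm v)" by blast
          then show "t \<le> Mstar * binf / norm y" using vb by simp
        qed
        finally have "\<alpha> * norm y \<le> Mstar * binf" using ny by (simp add: le_divide_eq)
        then show ?thesis using pos y_def by (simp add: le_divide_eq mult.commute)
      qed
      have "norm (u - ub) \<le> norm (u - w0) + norm (w0 - ub)"
        using norm_triangle_ineq[of "u - w0" "w0 - ub"] by simp
      also have "norm (w0 - ub) \<le> (Mstar / \<alpha>) * binf" using yb by simp
      also have "(Mstar / \<alpha>) * binf \<le> (Mstar / \<alpha>) * (((C/c) * M * norm (u - w0) + M * norm (u - w0)) / \<kappa>)"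
        using binfb pos by (intro mult_left_mono) auto
      finally show ?thesis by simp
    qed
    define K where "K = 1 + 2 * (C / c) * (Mstar / \<alpha>) * (M / \<kappa>)"
    have w0ex: "wt 0 \<in> Wt" using wtW by blast
    show ?thesis
    proof (cases "\<exists>w0\<in>Wt. u - w0 \<noteq> 0")
      case False
      hence "\<forall>w0\<in>Wt. norm (u - w0) = 0" by simp
      hence img: "(\<lambda>w. norm (u - w)) ` Wt = {0}" using w0ex by auto
      have "norm (u - ub) \<le> 0" using core[OF w0ex] False w0ex by simp
      then show ?thesis using img by simp
    next
      case True
      then obtain w1 where "u - w1 \<noteq> 0" by blast
      hence M0: "M \<ge> 0" by (rule Mnn)
      have coefK: "1 + (Mstar / \<alpha>) * ((C/c) * M + M) / \<kappa> \<le> K"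
      proof -
        have cc: "C / c \<ge> 1" using cC by simp
        have "(Mstar / \<alpha>) * ((C/c) * M + M) / \<kappa> = ((C/c) + 1) * ((Mstar / \<alpha>) * (M / \<kappa>))"
          using pos cC by (simp add: field_simps)
        also have "\<dots> \<le> (2 * (C/c)) * ((Mstar / \<alpha>) * (M / \<kappa>))"
          using cc pos M0 by (intro mult_right_mono) auto
        finally show ?thesis unfolding K_def by (simp add: mult.assoc)
      qed
      have "0 \<le> (Mstar / \<alpha>) * ((C/c) * M + M) / \<kappa>" using pos M0 cC by simp
      hence Kpos: "K > 0" using coefK by linarith
      have each: "norm (u - ub) / K \<le> norm (u - w0)" if "w0 \<in> Wt" for w0
      proof -
        have "norm (u - ub) \<le> (1 + (Mstar / \<alpha>) * ((C/c) * M + M) / \<kappa>) * norm (u - w0)"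
          using core[OF that] by (simp add: algebra_simps)
        also have "\<dots> \<le> K * norm (u - w0)" using coefK by (intro mult_right_mono) auto
        finally show ?thesis using Kpos by (simp add: divide_le_eq mult.commute)
      qed
      have "norm (u - ub) / K \<le> Inf ((\<lambda>w. norm (u - w)) ` Wt)"
        by (rule cINF_greatest) (use w0ex each in auto)
      then show ?thesis using Kpos unfolding K_def by (simp add: divide_le_eq mult.commute)
    qed
  qed
  have part2: "bounded (range wt) \<and> (\<exists>r ub. strict_mono r \<and> weakly_converges_to (wt \<circ> r) ub)"
    if wtW: "\<forall>n. wt n \<in> Wt" and wtL: "(\<lambda>n. J (u - wt n)) \<longlonglongrightarrow> Lm" for wt
  proof -
    define w0 where "w0 = wt 0"
    have w0: "w0 \<in> Wt" using wtW w0_def by blast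
    have "convergent (\<lambda>n. J (u - wt n))" using wtL unfolding convergent_def by blast
    then have "Bseq (\<lambda>n. J (u - wt n))" by (rule convergent_imp_Bseq)
    then obtain K where K: "K > 0" "\<And>n. norm (J (u - wt n)) \<le> K" unfolding Bseq_def by blast
    have nbd: "norm (wt n) \<le> norm w0 + (K / c + M * norm (u - w0)) / \<kappa>" for n
    proof -
      have "\<kappa> * norm (w0 - wt n) \<le> J (u - wt n) / c + M * norm (u - w0)" using seqbd[of w0 wt n, OF w0 wtW[rule_format, of n]] .
      also have "J (u - wt n) / c \<le> K / c" using K(2)[of n] cC by (simp add: divide_right_mono)
      finally have "norm (w0 - wt n) \<le> (K / c + M * norm (u - w0)) / \<kappa>"
        using pos by (simp add: pos_le_divide_eq mult.commute)
      moreover have "norm (wt n) \<le> norm w0 + norm (w0 - wt n)"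
        using norm_triangle_ineq[of w0 "wt n - w0"] by (simp add: norm_minus_commute)
      ultimately show ?thesis by simp
    qed
    have "\<forall>x\<in>range wt. norm x \<le> norm w0 + (K / c + M * norm (u - w0)) / \<kappa>" using nbd by auto
    then have bd: "bounded (range wt)" unfolding bounded_iff by (rule exI)
    from weak_subseq[OF reflW sepW bd] show ?thesis using bd by (intro conjI)
  qed
  show ?thesis
  proof (intro conjI allI impI)
    fix wt :: "nat \<Rightarrow> 'w" and ub
    assume h: "(\<forall>n. wt n \<in> Wt) \<and> (\<lambda>n. J (u - wt n)) \<longlonglongrightarrow> Inf ((\<lambda>w. J (u - w)) ` Wt) \<and> weakly_converges_to wt ub"
    show "norm (u - ub) \<le> (1 + 2 * (C / c) * (Mstar / \<alpha>) * (M / \<kappa>)) * Inf ((\<lambda>w. norm (u - w)) ` Wt)"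
      by (rule part1) (use h Lm_def in auto)
  next
    fix wt :: "nat \<Rightarrow> 'w"
    assume h: "(\<forall>n. wt n \<in> Wt) \<and> (\<lambda>n. J (u - wt n)) \<longlonglongrightarrow> Inf ((\<lambda>w. J (u - w)) ` Wt)"
    have "bounded (range wt) \<and> (\<exists>r ub. strict_mono r \<and> weakly_converges_to (wt \<circ> r) ub)"
      by (rule part2) (use h Lm_def in auto)
    then show "bounded (range wt)" "\<exists>r ub. strict_mono r \<and> weakly_converges_to (wt \<circ> r) ub" by auto
  qed
qed

end
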